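(* Let $\mathbb{X}$ be a discrete group with identity $\circ$, let $\mu$ be a finitely supported probability measure on $\mathbb{X}$ satisfying (A1) $\mu(xzx^{-1})=\mu(z)$ for all $x,z\in\mathbb{X}$ and (A2) $\mu(z)=\mu(z^{-1})$ for all $z\in\mathbb{X}$, and let $(X_t)_{t\ge0}$ be the continuous-time Markov chain on $\mathbb{X}$ started at $X_0=\circ$ with generator $(Lf)(x)=\sum_{z\in\mathbb{X}}\mu(z)(f(xz)-f(x))$. For $t\ge0$ let $f_t(x):=\mathbb{P}(X_t=x)$. Then for all $t\ge 0$, $$2t\,\mathbb{E}\left[\Gamma\log f_t(X_t)\right]\le\sum_{z\in\mathbb{X}}\mathcal{U}(\mu(z)t).$$
   Context: $\Gamma g(x):=\frac12\sum_{z\in\mathbb{X}}\mu(z)(g(xz)-g(x))^2$. The function $\mathcal{U}\colon[0,\infty)\to[0,\infty)$ is $\mathcal{U}(s):=2s\,\mathbb{E}\left[\log_+^2\left\{\frac{1+N_s}{s}\right\}\right]$ for $s>0$, with $\mathcal{U}(0):=0$, where $\log_+(u)=\max\{\log u,0\}$ and $N_s$ is a Poisson random variable with mean $s$. *)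

theory Defs
  imports "HOL-Analysis.Analysis"
begin

text \<open>The group is written additively (type class group_add, not necessarily
commutative): group product x z is x + z, identity is 0, inverse is -z.\<close>

definition supp :: "('a \<Rightarrow> real) \<Rightarrow> 'a set" where
  "supp \<mu> = {z. \<mu> z \<noteq> 0}"

fun conv_pow :: "('a::group_add \<Rightarrow> real) \<Rightarrow> nat \<Rightarrow> 'a \<Rightarrow> real" where
  "conv_pow \<mu> 0 x = (if x = 0 then 1 else 0)"
| "conv_pow \<mu> (Suc n) x = (\<Sum>z\<in>supp \<mu>. conv_pow \<mu> n (x - z) * \<mu> z)"

text \<open>f_t(x) = P(X_t = x) for the chain with generator
 (Lf)(x) = sum_z mu(z)(f(xz) - f(x)) started at the identity, i.e. the entry of
 exp(t L) = exp(-t) sum_n t^n/n! P^n.\<close>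
definition heat_kernel :: "('a::group_add \<Rightarrow> real) \<Rightarrow> real \<Rightarrow> 'a \<Rightarrow> real" where
  "heat_kernel \<mu> t x = (\<Sum>n. exp (- t) * t ^ n / fact n * conv_pow \<mu> n x)"

definition carre_du_champ :: "('a::group_add \<Rightarrow> real) \<Rightarrow> ('a \<Rightarrow> real) \<Rightarrow> 'a \<Rightarrow> real" where
  "carre_du_champ \<mu> g x = 1/2 * (\<Sum>z\<in>supp \<mu>. \<mu> z * (g (x + z) - g x)^2)"

definition log_plus :: "real \<Rightarrow> real" where
  "log_plus u = max (ln u) 0"

definition U_fun :: "real \<Rightarrow> real" where
  "U_fun s = (if s = 0 then 0 else
     2 * s * (\<Sum>n. exp (- s) * s ^ n / fact n * (log_plus ((1 + real n) / s))^2))"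

end

theory Submission
  imports Defs
begin

lemma has_sum_sum_fun:
  fixes f :: "'i \<Rightarrow> 'a \<Rightarrow> real"
  assumes "finite I" "\<And>i. i \<in> I \<Longrightarrow> (f i has_sum s i) A"
  shows "((\<lambda>x. \<Sum>i\<in>I. f i x) has_sum (\<Sum>i\<in>I. s i)) A"
  using assms
proof (induction I rule: finite_induct)
  case empty then show ?case by simp
next
  case (insert j I)
  then show ?case by (simp add: has_sum_add)
qed

lemma swap_nonneg:
  fixes f :: "'a \<Rightarrow> 'b \<Rightarrow> real"
  assumes nn: "\<And>x y. 0 \<le> f x y" and inner: "\<And>y. ((\<lambda>x. f x y) has_sum g y) UNIV"
    and outer: "(g has_sum S) UNIV"
  shows "((\<lambda>y. f x y) has_sum (\<Sum>\<^sub>\<infinity>y. f x y)) UNIV"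
    and "((\<lambda>x. \<Sum>\<^sub>\<infinity>y. f x y) has_sum S) UNIV"
proof -
  define F where "F = (\<lambda>(y,x). f x y)"
  have s1: "F summable_on Sigma UNIV (\<lambda>_. UNIV)"
    unfolding F_def
    by (rule summable_on_SigmaI[where g=g]) (use inner outer nn has_sum_imp_summable in auto)
  have h1: "(F has_sum S) (UNIV \<times> UNIV)"
    using s1 unfolding F_def
    by (intro has_sum_SigmaI[where g=g]) (use inner outer in auto)
  have h2: "((\<lambda>(x,y). f x y) has_sum S) (UNIV \<times> UNIV)"
    using h1 has_sum_swap[where f=F and S=S and A=UNIV and B=UNIV] unfolding F_def by simp
  have s2: "\<And>x. f x summable_on UNIV"
    using summable_on_SigmaD1[of f UNIV "\<lambda>_. UNIV"] h2 has_sum_imp_summable by blast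
  show "((\<lambda>y. f x y) has_sum (\<Sum>\<^sub>\<infinity>y. f x y)) UNIV" using s2 by simp
  show "((\<lambda>x. \<Sum>\<^sub>\<infinity>y. f x y) has_sum S) UNIV"
    using has_sum_SigmaD[where f="\<lambda>(x,y). f x y" and S=S and A=UNIV and B="\<lambda>_. UNIV" and g="\<lambda>x. \<Sum>\<^sub>\<infinity>y. f x y"] h2 s2
    by auto
qed

lemma has_sum_shift:
  fixes g :: "'a::group_add \<Rightarrow> real"
  assumes "(g has_sum s) UNIV"
  shows "((\<lambda>x. g (x + c)) has_sum s) UNIV"
proof -
  have "(g has_sum s) UNIV = ((\<lambda>x. g (x + c)) has_sum s) UNIV"
    apply (rule has_sum_reindex_bij_witness[where i="\<lambda>x. x + c" and j="\<lambda>y. y - c" and g=g and h="\<lambda>x. g (x + c)"])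
    apply simp_all
    done
  then show ?thesis using assms by simp
qed

lemma has_sum_shift_minus:
  fixes g :: "'a::group_add \<Rightarrow> real"
  assumes "(g has_sum s) UNIV"
  shows "((\<lambda>x. g (x - c)) has_sum s) UNIV"
  using has_sum_shift[OF assms, of "- c"] by (simp add: diff_conv_add_uminus del: add_uminus_conv_diff)

lemma conv_pow_nonneg:
  assumes "\<And>z. \<nu> z \<ge> 0"
  shows "conv_pow \<nu> n x \<ge> 0"
  using assms by (induction n arbitrary: x) (auto intro!: sum_nonneg)

lemma conv_pow_has_sum:
  fixes \<nu> :: "'a::group_add \<Rightarrow> real"
  assumes "finite (supp \<nu>)"
  shows "(conv_pow \<nu> n has_sum (\<Sum>w\<in>supp \<nu>. \<nu> w) ^ n) UNIV"
proof (induction n)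
  case 0
  have "((\<lambda>x. if x = 0 then 1 else 0::real) has_sum 1) UNIV"
    by (rule has_sum_finite_neutralI[of "{0}"]) auto
  moreover have "conv_pow \<nu> 0 = (\<lambda>x. if x = 0 then 1 else 0)" by (rule ext) simp
  ultimately show ?case by simp
next
  case (Suc n)
  have "\<And>w. ((\<lambda>x. conv_pow \<nu> n (x - w) * \<nu> w) has_sum ((\<Sum>w\<in>supp \<nu>. \<nu> w) ^ n * \<nu> w)) UNIV"
  proof -
    fix w
    have "((\<lambda>x. conv_pow \<nu> n (x - w)) has_sum ((\<Sum>w\<in>supp \<nu>. \<nu> w) ^ n)) UNIV"
      using Suc by (rule has_sum_shift_minus)
    then show "?thesis w" by (rule has_sum_cmult_left)
  qed
  then have "((\<lambda>x. \<Sum>w\<in>supp \<nu>. conv_pow \<nu> n (x - w) * \<nu> w) has_sum (\<Sum>w\<in>supp \<nu>. (\<Sum>w\<in>supp \<nu>. \<nu> w) ^ n * \<nu> w)) UNIV"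
    by (intro has_sum_sum_fun assms)
  then show ?case by (simp add: sum_distrib_right[symmetric] mult.commute)
qed

lemma conv_pow_le1:
  fixes \<nu> :: "'a::group_add \<Rightarrow> real"
  assumes "finite (supp \<nu>)" "\<And>z. \<nu> z \<ge> 0" "(\<Sum>w\<in>supp \<nu>. \<nu> w) \<le> 1"
  shows "conv_pow \<nu> n x \<le> 1"
proof -
  have "conv_pow \<nu> n x \<le> (\<Sum>w\<in>supp \<nu>. \<nu> w) ^ n"
    using finite_sum_le_has_sum[OF conv_pow_has_sum[OF assms(1), of n], of "{x}"]
      conv_pow_nonneg[of \<nu>] assms(2) by auto
  also have "\<dots> \<le> 1" using assms by (simp add: power_le_one sum_nonneg)
  finally show ?thesis .
qed

lemma pascal_sum:
  fixes G :: "nat \<Rightarrow> real"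
  shows "(\<Sum>k\<le>Suc n. real (Suc n choose k) * G k)
       = (\<Sum>k\<le>n. real (n choose k) * G (Suc k)) + (\<Sum>k\<le>n. real (n choose k) * G k)"
proof -
  have "(\<Sum>k\<le>Suc n. real (Suc n choose k) * G k)
      = G 0 + (\<Sum>k\<le>n. real (Suc n choose Suc k) * G (Suc k))"
    by (subst sum.atMost_Suc_shift) simp
  also have "\<dots> = (\<Sum>k\<le>n. real (n choose k) * G (Suc k)) + (G 0 + (\<Sum>k\<le>n. real (n choose Suc k) * G (Suc k)))"
    by (simp add: sum.distrib algebra_simps)
  also have "G 0 + (\<Sum>k\<le>n. real (n choose Suc k) * G (Suc k)) = (\<Sum>k\<le>Suc n. real (n choose k) * G k)"
    by (subst sum.atMost_Suc_shift) simp
  also have "\<dots> = (\<Sum>k\<le>n. real (n choose k) * G k)"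
    by simp
  finally show ?thesis .
qed

fun zp :: "'a::group_add \<Rightarrow> nat \<Rightarrow> 'a" where
  "zp z 0 = 0"
| "zp z (Suc k) = zp z k + z"

lemma zp_comm: "zp z k + z = z + zp z k"
  by (induction k) (simp_all add: add.assoc)

definition mu_rm :: "('a \<Rightarrow> real) \<Rightarrow> 'a \<Rightarrow> 'a \<Rightarrow> real" where
  "mu_rm \<mu> z = (\<lambda>w. if w = z then 0 else \<mu> w)"

lemma supp_mu_rm: "supp (mu_rm \<mu> z) = supp \<mu> - {z}"
  by (auto simp: supp_def mu_rm_def)

lemma conj_zp_eq_z:
  fixes z :: "'a::group_add"
  shows "zp z k + w - zp z k = z \<longleftrightarrow> w = z"
proof
  assume h: "zp z k + w - zp z k = z"
  have "w = - zp z k + (zp z k + w - zp z k) + zp z k"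
    by (simp add: diff_conv_add_uminus add.assoc del: add_uminus_conv_diff)
  also have "\<dots> = - zp z k + z + zp z k" using h by simp
  also have "\<dots> = - zp z k + (zp z k + z)" by (simp only: add.assoc zp_comm)
  also have "\<dots> = z" by (simp only: add.assoc[symmetric] left_minus add_0)
  finally show "w = z" .
next
  assume "w = z"
  moreover have "zp z k + z - zp z k = z + zp z k - zp z k" by (simp only: zp_comm)
  ultimately show "zp z k + w - zp z k = z" by simp
qed

lemma conj_sum:
  fixes \<mu> :: "'a::group_add \<Rightarrow> real"
  assumes A1: "\<forall>x z. \<mu> (x + z - x) = \<mu> z" and c: "c = zp z k"
  shows "(\<Sum>w\<in>supp (mu_rm \<mu> z). g (x - w - c) * mu_rm \<mu> z w)
       = (\<Sum>w\<in>supp (mu_rm \<mu> z). g (x - c - w) * mu_rm \<mu> z w)"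
proof -
  have m: "mu_rm \<mu> z (c + w - c) = mu_rm \<mu> z w" for w
    using A1 conj_zp_eq_z[of z k w] c by (simp add: mu_rm_def)
  have e: "x - c - (c + w - c) = x - w - c" for w
    by (simp add: diff_conv_add_uminus minus_add add.assoc del: add_uminus_conv_diff)
  have i1: "- c + (c + w - c) + c = w" for w
    by (simp add: diff_conv_add_uminus add.assoc del: add_uminus_conv_diff)
  have i2: "c + (- c + w + c) - c = w" for w
    by (simp add: diff_conv_add_uminus add.assoc del: add_uminus_conv_diff)
  have m2: "mu_rm \<mu> z (- c + w + c) = mu_rm \<mu> z w" for w
    using m[of "- c + w + c"] i2[of w] by simp
  show ?thesis
  proof (rule sum.reindex_bij_witness[where i="\<lambda>w. - c + w + c" and j="\<lambda>w. c + w - c"])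
    fix a assume "a \<in> supp (mu_rm \<mu> z)"
    show "- c + (c + a - c) + c = a" by (rule i1)
    show "c + a - c \<in> supp (mu_rm \<mu> z)" using \<open>a \<in> _\<close> m[of a] by (simp add: supp_def)
    show "g (x - c - (c + a - c)) * mu_rm \<mu> z (c + a - c) = g (x - a - c) * mu_rm \<mu> z a"
      by (simp only: e m)
  next
    fix b assume "b \<in> supp (mu_rm \<mu> z)"
    show "c + (- c + b + c) - c = b" by (rule i2)
    show "- c + b + c \<in> supp (mu_rm \<mu> z)" using \<open>b \<in> _\<close> m2[of b] by (simp add: supp_def)
  qed
qed

lemma conv_pow_split:
  fixes \<mu> :: "'a::group_add \<Rightarrow> real"
  assumes fin: "finite (supp \<mu>)" and A1: "\<forall>x z. \<mu> (x + z - x) = \<mu> z" and zS: "z \<in> supp \<mu>"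
  shows "conv_pow \<mu> n x = (\<Sum>k\<le>n. real (n choose k) *
            (\<mu> z ^ k * conv_pow (mu_rm \<mu> z) (n - k) (x - zp z k)))"
proof (induction n arbitrary: x)
  case 0
  then show ?case by simp
next
  case (Suc n)
  let ?R = "conv_pow (mu_rm \<mu> z)"
  let ?S' = "supp (mu_rm \<mu> z)"
  define G where "G k = \<mu> z ^ k * ?R (Suc n - k) (x - zp z k)" for k
  have finS': "finite ?S'" using fin by (simp add: supp_mu_rm)
  have "conv_pow \<mu> (Suc n) x = (\<Sum>w\<in>supp \<mu>. conv_pow \<mu> n (x - w) * \<mu> w)" by simp
  also have "\<dots> = conv_pow \<mu> n (x - z) * \<mu> z + (\<Sum>w\<in>supp \<mu> - {z}. conv_pow \<mu> n (x - w) * \<mu> w)"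
    using fin zS by (simp add: sum.remove)
  also have "(\<Sum>w\<in>supp \<mu> - {z}. conv_pow \<mu> n (x - w) * \<mu> w) = (\<Sum>w\<in>?S'. conv_pow \<mu> n (x - w) * mu_rm \<mu> z w)"
    unfolding supp_mu_rm by (intro sum.cong refl) (simp add: mu_rm_def)
  also have "conv_pow \<mu> n (x - z) * \<mu> z = (\<Sum>k\<le>n. real (n choose k) * G (Suc k))"
  proof -
    have "conv_pow \<mu> n (x - z) * \<mu> z = (\<Sum>k\<le>n. real (n choose k) *
            (\<mu> z ^ k * ?R (n - k) (x - z - zp z k))) * \<mu> z" using Suc by simp
    also have "\<dots> = (\<Sum>k\<le>n. real (n choose k) * G (Suc k))"
      unfolding sum_distrib_right G_def
      by (intro sum.cong refl) (simp add: diff_conv_add_uminus minus_add add.assoc del: add_uminus_conv_diff)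
    finally show ?thesis .
  qed
  also have "(\<Sum>w\<in>?S'. conv_pow \<mu> n (x - w) * mu_rm \<mu> z w) = (\<Sum>k\<le>n. real (n choose k) * G k)"
  proof -
    have "(\<Sum>w\<in>?S'. conv_pow \<mu> n (x - w) * mu_rm \<mu> z w)
        = (\<Sum>w\<in>?S'. \<Sum>k\<le>n. real (n choose k) * \<mu> z ^ k * (?R (n - k) (x - w - zp z k) * mu_rm \<mu> z w))"
      using Suc by (simp add: sum_distrib_right mult.assoc)
    also have "\<dots> = (\<Sum>k\<le>n. real (n choose k) * \<mu> z ^ k * (\<Sum>w\<in>?S'. ?R (n - k) (x - w - zp z k) * mu_rm \<mu> z w))"
      by (simp add: sum.swap[of _ ?S'] sum_distrib_left)
    also have "\<dots> = (\<Sum>k\<le>n. real (n choose k) * \<mu> z ^ k * (\<Sum>w\<in>?S'. ?R (n - k) (x - zp z k - w) * mu_rm \<mu> z w))"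
      by (intro sum.cong refl arg_cong2[where f="(*)"] conj_sum[OF A1]) simp
    also have "\<dots> = (\<Sum>k\<le>n. real (n choose k) * G k)"
      unfolding G_def by (intro sum.cong refl) (simp add: Suc_diff_le)
    finally show ?thesis .
  qed
  also have "(\<Sum>k\<le>n. real (n choose k) * G (Suc k)) + (\<Sum>k\<le>n. real (n choose k) * G k)
      = (\<Sum>k\<le>Suc n. real (Suc n choose k) * G k)"
    by (rule pascal_sum[symmetric])
  finally show ?case unfolding G_def .
qed

lemma exp_series_has_sum: "((\<lambda>n. y ^ n / fact n) has_sum exp y) UNIV" if "y \<ge> 0" for y :: real
proof -
  have "(\<lambda>n. y ^ n / fact n) sums exp y" using exp_converges[of y] by (simp add: divide_inverse_commute)
  then show ?thesis using that by (intro sums_nonneg_imp_has_sum) auto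
qed

lemma hk_series:
  fixes \<mu> :: "'a::group_add \<Rightarrow> real"
  assumes nonneg: "\<forall>z. \<mu> z \<ge> 0" and fin: "finite (supp \<mu>)" and prob: "(\<Sum>z\<in>supp \<mu>. \<mu> z) = 1"
    and t: "t \<ge> 0"
  shows "((\<lambda>n. exp (- t) * t ^ n / fact n * conv_pow \<mu> n x) has_sum heat_kernel \<mu> t x) UNIV"
proof -
  have nn: "0 \<le> exp (- t) * t ^ n / fact n * conv_pow \<mu> n x" for n
    using t nonneg by (intro mult_nonneg_nonneg conv_pow_nonneg) auto
  have le: "exp (- t) * t ^ n / fact n * conv_pow \<mu> n x \<le> exp (- t) * (t ^ n / fact n)" for n
  proof -
    have "conv_pow \<mu> n x \<le> 1" using conv_pow_le1[of \<mu> n x] fin nonneg prob by auto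
    moreover have "0 \<le> exp (- t) * t ^ n / fact n" using t by simp
    ultimately have "exp (- t) * t ^ n / fact n * conv_pow \<mu> n x \<le> exp (- t) * t ^ n / fact n * 1"
      by (intro mult_left_mono) auto
    then show ?thesis by simp
  qed
  have "summable (\<lambda>n. exp (- t) * (t ^ n / fact n))"
    using exp_converges[of t] by (intro summable_mult) (simp add: sums_summable divide_inverse_commute)
  then have "summable (\<lambda>n. exp (- t) * t ^ n / fact n * conv_pow \<mu> n x)"
  proof (rule summable_comparison_test'[where N=0])
    fix n :: nat
    show "norm (exp (- t) * t ^ n / fact n * conv_pow \<mu> n x) \<le> exp (- t) * (t ^ n / fact n)"
      using nn[of n] le[of n] by (simp only: real_norm_def abs_of_nonneg)
  qed
  then have "(\<lambda>n. exp (- t) * t ^ n / fact n * conv_pow \<mu> n x) sums heat_kernel \<mu> t x"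
    unfolding heat_kernel_def by (rule summable_sums)
  then show ?thesis using nn by (intro sums_nonneg_imp_has_sum) auto
qed

definition beta :: "('a::group_add \<Rightarrow> real) \<Rightarrow> 'a \<Rightarrow> real \<Rightarrow> nat \<Rightarrow> nat \<Rightarrow> 'a \<Rightarrow> real" where
  "beta \<mu> z t k m x = exp (- t) * ((\<mu> z * t) ^ k / fact k) * (t ^ m / fact m)
      * conv_pow (mu_rm \<mu> z) m (x - zp z k)"

lemma beta_nonneg:
  assumes "\<forall>z. \<mu> z \<ge> 0" "t \<ge> 0"
  shows "beta \<mu> z t k m x \<ge> 0"
  unfolding beta_def using assms
  by (intro mult_nonneg_nonneg conv_pow_nonneg) (auto simp: mu_rm_def)

lemma term_split:
  fixes \<mu> :: "'a::group_add \<Rightarrow> real"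
  assumes fin: "finite (supp \<mu>)" and A1: "\<forall>x z. \<mu> (x + z - x) = \<mu> z" and zS: "z \<in> supp \<mu>"
  shows "exp (- t) * t ^ n / fact n * conv_pow \<mu> n x = (\<Sum>k\<le>n. beta \<mu> z t k (n - k) x)"
proof -
  have "exp (- t) * t ^ n / fact n * conv_pow \<mu> n x
      = (\<Sum>k\<le>n. exp (- t) * t ^ n / fact n * (real (n choose k) *
            (\<mu> z ^ k * conv_pow (mu_rm \<mu> z) (n - k) (x - zp z k))))"
    by (subst conv_pow_split[OF fin A1 zS]) (simp add: sum_distrib_left)
  also have "\<dots> = (\<Sum>k\<le>n. beta \<mu> z t k (n - k) x)"
  proof (intro sum.cong refl)
    fix k assume "k \<in> {..n}"
    then have kn: "k \<le> n" by simp
    have tn: "t ^ n = t ^ k * t ^ (n - k)" using kn by (simp add: power_add[symmetric])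
    have ch: "real (n choose k) = fact n / (fact k * fact (n - k))" using kn by (rule binomial_fact)
    show "exp (- t) * t ^ n / fact n * (real (n choose k) *
            (\<mu> z ^ k * conv_pow (mu_rm \<mu> z) (n - k) (x - zp z k))) = beta \<mu> z t k (n - k) x"
      unfolding beta_def tn ch by (simp add: power_mult_distrib field_simps)
  qed
  finally show ?thesis .
qed

lemma hk_pairs:
  fixes \<mu> :: "'a::group_add \<Rightarrow> real"
  assumes nonneg: "\<forall>z. \<mu> z \<ge> 0" and fin: "finite (supp \<mu>)" and prob: "(\<Sum>z\<in>supp \<mu>. \<mu> z) = 1"
    and A1: "\<forall>x z. \<mu> (x + z - x) = \<mu> z" and zS: "z \<in> supp \<mu>" and t: "t \<ge> 0"
  shows "((\<lambda>(k,m). beta \<mu> z t k m x) has_sum heat_kernel \<mu> t x) UNIV"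
proof -
  define g where "g = (\<lambda>(n,k). beta \<mu> z t k (n - k) x)"
  have inner: "((\<lambda>k. g (n, k)) has_sum (exp (- t) * t ^ n / fact n * conv_pow \<mu> n x)) {..n}" for n
    unfolding g_def using term_split[OF fin A1 zS, of t n x] by (simp add: has_sum_finiteI)
  have outer: "((\<lambda>n. exp (- t) * t ^ n / fact n * conv_pow \<mu> n x) has_sum heat_kernel \<mu> t x) UNIV"
    by (rule hk_series[OF nonneg fin prob t])
  have sm: "g summable_on Sigma UNIV (\<lambda>n. {..n})"
    by (rule summable_on_SigmaI[OF inner has_sum_imp_summable[OF outer]])
       (auto simp: g_def beta_nonneg[OF nonneg t])
  have "(g has_sum heat_kernel \<mu> t x) (Sigma UNIV (\<lambda>n. {..n}))"
    by (rule has_sum_SigmaI[OF inner outer sm])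
  moreover have "(g has_sum heat_kernel \<mu> t x) (Sigma UNIV (\<lambda>n. {..n}))
      = ((\<lambda>(k,m). beta \<mu> z t k m x) has_sum heat_kernel \<mu> t x) UNIV"
    by (rule has_sum_reindex_bij_witness[where j="\<lambda>(n,k). (k, n - k)" and i="\<lambda>(k,m). (k + m, k)"])
       (auto simp: g_def)
  ultimately show ?thesis by simp
qed

definition Fh :: "real \<Rightarrow> real" where "Fh v = (log_plus (1 / v))^2"
definition Dh :: "real \<Rightarrow> real" where "Dh m = (if m < 1 then 2 * ln m / m else 0)"

lemma log_plus_nonneg: "log_plus u \<ge> 0" by (simp add: log_plus_def)

lemma Fh_nonneg: "Fh v \<ge> 0" by (simp add: Fh_def)

lemma Fh_ge1: "1 \<le> v \<Longrightarrow> Fh v = 0"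
  by (simp add: Fh_def log_plus_def ln_div)

lemma Fh_anti:
  assumes "0 < v" "v \<le> w" shows "Fh w \<le> Fh v"
proof -
  have "ln (1 / w) \<le> ln (1 / v)" using assms by (simp add: ln_div)
  then have "log_plus (1 / w) \<le> log_plus (1 / v)" by (auto simp: log_plus_def)
  then show ?thesis unfolding Fh_def by (intro power_mono log_plus_nonneg)
qed

lemma Fh_lt1: "0 < m \<Longrightarrow> m < 1 \<Longrightarrow> Fh m = (ln m)^2"
  by (simp add: Fh_def log_plus_def ln_div)

lemma Fh_alt: "0 < v \<Longrightarrow> Fh v = (max (- ln v) 0)^2"
  by (simp add: Fh_def log_plus_def ln_div)

lemma tangent:
  assumes v: "0 < v" and m: "0 < m"
  shows "Fh m + Dh m * (v - m) \<le> Fh v"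
proof (cases "m < 1")
  case False
  then show ?thesis using Fh_ge1[of m] Fh_nonneg[of v] by (simp add: Dh_def)
next
  case True
  define A where "A = ln m"
  define b where "b = ln v"
  have A: "A < 0" using True m by (simp add: A_def)
  have "ln (v / m) \<le> v / m - 1" using v m by (intro ln_le_minus_one) auto
  then have key: "b - A \<le> v / m - 1" using v m by (simp add: ln_div A_def b_def)
  have "Dh m * (v - m) = 2 * A * (v / m - 1)" using True m by (simp add: Dh_def A_def field_simps)
  also have "\<dots> \<le> 2 * A * (b - A)" using A key by (intro mult_left_mono_neg) auto
  finally have d: "Dh m * (v - m) \<le> 2 * A * (b - A)" .
  have fm: "Fh m = A^2" using Fh_lt1[OF m True] by (simp add: A_def)
  have fv: "Fh v = (max (- b) 0)^2" using Fh_alt[OF v] by (simp add: b_def)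
  have "A^2 + 2 * A * (b - A) \<le> (max (- b) 0)^2"
  proof (cases "b \<le> 0")
    case True
    then have "(max (- b) 0)^2 = b^2" by (simp add: max_def power2_eq_square)
    moreover have "0 \<le> (b - A)^2" by simp
    ultimately show ?thesis by (simp add: power2_eq_square algebra_simps)
  next
    case False
    then have "A * b < 0" using A by (simp add: mult_neg_pos)
    moreover have "0 \<le> (max (- b) 0)^2" "0 \<le> A^2" by simp_all
    moreover have "A^2 + 2 * A * (b - A) = 2 * (A * b) - A^2" by (simp add: power2_eq_square algebra_simps)
    ultimately show ?thesis by linarith
  qed
  then show ?thesis using d fm fv by linarith
qed

lemma jensen_tangent:
  fixes w u :: "'i \<Rightarrow> real"
  assumes wn: "\<And>i. 0 \<le> w i" and up: "\<And>i. 0 < u i"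
    and hW: "(w has_sum W) I" and hB: "((\<lambda>i. w i * u i) has_sum B) I"
    and hC: "((\<lambda>i. w i * Fh (u i)) has_sum C) I"
    and W: "0 < W" and BY: "B \<le> Y"
  shows "W * Fh (Y / W) \<le> C"
proof -
  have Bpos: "0 < B"
  proof (rule ccontr)
    assume "\<not> 0 < B"
    then have "B \<le> 0" by simp
    then have "\<And>i. i \<in> I \<Longrightarrow> w i * u i = 0"
      using nonneg_has_sum_le_0D[OF hB] wn up by (meson less_imp_le mult_nonneg_nonneg)
    then have "\<And>i. i \<in> I \<Longrightarrow> w i = 0" using up by (metis less_irrefl mult_eq_0_iff)
    then have "(w has_sum 0) I" by (rule has_sum_0)
    then have "W = 0" using hW has_sum_unique by blast
    then show False using W by simp
  qed
  define m where "m = B / W"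
  have m: "0 < m" using Bpos W by (simp add: m_def)
  have mW: "m * W = B" using W by (simp add: m_def)
  have "Fh (Y / W) \<le> Fh m" using Fh_anti[OF m] BY W by (simp add: m_def divide_right_mono)
  then have "W * Fh (Y / W) \<le> W * Fh m" using W by (simp add: mult_left_mono)
  also have "W * Fh m \<le> C"
  proof -
    have h1: "((\<lambda>i. Fh m * w i + Dh m * (w i * u i) + (- Dh m * m) * w i) has_sum
               (Fh m * W + Dh m * B + (- Dh m * m) * W)) I"
      by (intro has_sum_add has_sum_cmult_right hW hB)
    have e: "Fh m * W + Dh m * B + (- Dh m * m) * W = W * Fh m" using mW by (simp add: algebra_simps)
    have "Fh m * W + Dh m * B + (- Dh m * m) * W \<le> C"
    proof (rule has_sum_mono[OF h1 hC])
      fix i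
      have "w i * (Fh m + Dh m * (u i - m)) \<le> w i * Fh (u i)"
        using tangent[OF up[of i] m] wn[of i] by (rule mult_left_mono)
      then show "Fh m * w i + Dh m * (w i * u i) + (- Dh m * m) * w i \<le> w i * Fh (u i)"
        by (simp add: algebra_simps)
    qed
    then show ?thesis using e by linarith
  qed
  finally show ?thesis .
qed

definition phi_sum :: "real \<Rightarrow> real" where
  "phi_sum s = (\<Sum>n. exp (- s) * s ^ n / fact n * (log_plus ((1 + real n) / s))^2)"

lemma log_plus_le: "0 < y \<Longrightarrow> log_plus y \<le> y"
  using ln_le_minus_one[of y] by (auto simp: log_plus_def)

lemma phi_has_sum:
  assumes s: "0 < s"
  shows "((\<lambda>n. exp (- s) * s ^ n / fact n * (log_plus ((1 + real n) / s))^2) has_sum phi_sum s) UNIV"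
proof -
  let ?a = "\<lambda>n. exp (- s) * s ^ n / fact n * (log_plus ((1 + real n) / s))^2"
  have nn: "0 \<le> ?a n" for n using s by simp
  have le: "?a n \<le> (exp (- s) / s^2) * ((4 * s) ^ n / fact n)" for n
  proof -
    have "log_plus ((1 + real n) / s) \<le> (1 + real n) / s"
      using s by (intro log_plus_le) auto
    then have "(log_plus ((1 + real n) / s))^2 \<le> ((1 + real n) / s)^2"
      by (intro power_mono log_plus_nonneg)
    also have "\<dots> = (1 + real n)^2 / s^2" by (simp add: power_divide)
    also have "(1 + real n)^2 \<le> 4 ^ n"
    proof -
      have "1 + real n \<le> 2 ^ n"
        using less_exp[of n] by (metis Suc_leI of_nat_Suc of_nat_le_iff of_nat_numeral of_nat_power add.commute)
      then have "(1 + real n)^2 \<le> (2 ^ n)^2" by (intro power_mono) auto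
      moreover have "((2::real) ^ n)^2 = 4 ^ n"
        by (simp only: power2_eq_square power_mult_distrib[symmetric]) simp
      ultimately show ?thesis by simp
    qed
    then have "(1 + real n)^2 / s^2 \<le> 4 ^ n / s^2" using s by (simp add: divide_right_mono)
    finally have L: "(log_plus ((1 + real n) / s))^2 \<le> 4 ^ n / s^2" .
    have "?a n \<le> exp (- s) * s ^ n / fact n * (4 ^ n / s^2)"
      using L s by (intro mult_left_mono) auto
    also have "\<dots> = (exp (- s) / s^2) * ((4 * s) ^ n / fact n)"
      by (simp add: power_mult_distrib field_simps)
    finally show ?thesis .
  qed
  have "summable (\<lambda>n. (exp (- s) / s^2) * ((4 * s) ^ n / fact n))"
    using exp_converges[of "4 * s"] by (intro summable_mult) (simp add: sums_summable divide_inverse_commute)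
  then have "summable ?a"
  proof (rule summable_comparison_test'[where N=0])
    fix n :: nat show "norm (?a n) \<le> (exp (- s) / s^2) * ((4 * s) ^ n / fact n)"
      using nn[of n] le[of n] by (simp only: real_norm_def abs_of_nonneg)
  qed
  then have "?a sums phi_sum s" unfolding phi_sum_def by (rule summable_sums)
  then show ?thesis using nn by (intro sums_nonneg_imp_has_sum) auto
qed

lemma mu_le1:
  fixes \<mu> :: "'a \<Rightarrow> real"
  assumes nonneg: "\<forall>z. \<mu> z \<ge> 0" and fin: "finite (supp \<mu>)" and prob: "(\<Sum>z\<in>supp \<mu>. \<mu> z) = 1"
    and zS: "z \<in> supp \<mu>"
  shows "\<mu> z \<le> 1"
  using member_le_sum[of z "supp \<mu>" \<mu>] nonneg fin prob zS by auto

lemma mu_rm_total: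
  fixes \<mu> :: "'a \<Rightarrow> real"
  assumes fin: "finite (supp \<mu>)" and prob: "(\<Sum>z\<in>supp \<mu>. \<mu> z) = 1" and zS: "z \<in> supp \<mu>"
  shows "(\<Sum>w\<in>supp (mu_rm \<mu> z). mu_rm \<mu> z w) = 1 - \<mu> z"
proof -
  have "(\<Sum>w\<in>supp (mu_rm \<mu> z). mu_rm \<mu> z w) = (\<Sum>w\<in>supp \<mu> - {z}. \<mu> w)"
    unfolding supp_mu_rm by (intro sum.cong refl) (simp add: mu_rm_def)
  also have "\<dots> = 1 - \<mu> z" using fin zS prob by (simp add: sum_diff1)
  finally show ?thesis .
qed

lemma beta_total:
  fixes \<mu> :: "'a::group_add \<Rightarrow> real"
  assumes fin: "finite (supp \<mu>)" and prob: "(\<Sum>z\<in>supp \<mu>. \<mu> z) = 1" and zS: "z \<in> supp \<mu>"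
  shows "((\<lambda>x. beta \<mu> z t k m x) has_sum
     exp (- t) * ((\<mu> z * t) ^ k / fact k) * (t ^ m / fact m) * (1 - \<mu> z) ^ m) UNIV"
proof -
  have fin': "finite (supp (mu_rm \<mu> z))" using fin by (simp add: supp_mu_rm)
  have "(conv_pow (mu_rm \<mu> z) m has_sum (1 - \<mu> z) ^ m) UNIV"
    using conv_pow_has_sum[OF fin', of m] mu_rm_total[OF fin prob zS] by simp
  then have "((\<lambda>x. conv_pow (mu_rm \<mu> z) m (x - zp z k)) has_sum (1 - \<mu> z) ^ m) UNIV"
    by (rule has_sum_shift_minus)
  then show ?thesis unfolding beta_def by (rule has_sum_cmult_right)
qed

lemma pairs_total:
  fixes \<mu> :: "'a::group_add \<Rightarrow> real"
  assumes nonneg: "\<forall>z. \<mu> z \<ge> 0" and fin: "finite (supp \<mu>)" and prob: "(\<Sum>z\<in>supp \<mu>. \<mu> z) = 1"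
    and zS: "z \<in> supp \<mu>" and t: "0 < t"
  shows "((\<lambda>(k,m). exp (- t) * ((\<mu> z * t) ^ k / fact k) * (t ^ m / fact m) * (1 - \<mu> z) ^ m
            * (log_plus ((1 + real k) / (\<mu> z * t)))^2) has_sum phi_sum (\<mu> z * t)) UNIV"
proof -
  define a where "a = \<mu> z"
  have a0: "0 < a" using zS nonneg by (auto simp: supp_def a_def order_le_less)
  have a1: "a \<le> 1" using mu_le1[OF nonneg fin prob zS] by (simp add: a_def)
  define s where "s = a * t"
  have s: "0 < s" using a0 t by (simp add: s_def)
  define \<phi> where "\<phi> k = (log_plus ((1 + real k) / s))^2" for k :: nat
  define F where "F = (\<lambda>(k,m). exp (- t) * (s ^ k / fact k) * (t ^ m / fact m) * (1 - a) ^ m * \<phi> k)"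
  have inner: "((\<lambda>m. F (k, m)) has_sum (exp (- s) * s ^ k / fact k * \<phi> k)) UNIV" for k
  proof -
    have "((\<lambda>m. ((1 - a) * t) ^ m / fact m) has_sum exp ((1 - a) * t)) UNIV"
      using a1 t by (intro exp_series_has_sum) auto
    then have H: "((\<lambda>m. exp (- t) * (s ^ k / fact k) * \<phi> k * (((1 - a) * t) ^ m / fact m)) has_sum
        (exp (- t) * (s ^ k / fact k) * \<phi> k * exp ((1 - a) * t))) UNIV"
      by (rule has_sum_cmult_right)
    have X: "exp (- t) * (s ^ k / fact k) * \<phi> k * exp ((1 - a) * t) = exp (- s) * s ^ k / fact k * \<phi> k"
    proof -
      have "exp (- t) * exp ((1 - a) * t) = exp (- s)"
        by (simp add: exp_add[symmetric] s_def algebra_simps)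
      then show ?thesis by (metis (no_types, lifting) mult.commute mult.left_commute times_divide_eq_right)
    qed
    have Fc: "(\<lambda>m. F (k, m)) = (\<lambda>m. exp (- t) * (s ^ k / fact k) * \<phi> k * (((1 - a) * t) ^ m / fact m))"
      by (rule ext) (simp add: F_def power_mult_distrib)
    show ?thesis unfolding Fc X[symmetric] by (rule H)
  qed
  have outer: "((\<lambda>k. exp (- s) * s ^ k / fact k * \<phi> k) has_sum phi_sum s) UNIV"
    using phi_has_sum[OF s] by (simp add: \<phi>_def)
  have Fnn: "0 \<le> F (k, m)" for k m using t a1 s by (simp add: F_def \<phi>_def)
  have sm: "F summable_on Sigma UNIV (\<lambda>_. UNIV)"
    by (rule summable_on_SigmaI[OF inner has_sum_imp_summable[OF outer]]) (use Fnn in auto)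
  have "(F has_sum phi_sum s) (Sigma UNIV (\<lambda>_. UNIV))"
    by (rule has_sum_SigmaI[OF inner outer sm])
  then show ?thesis by (simp add: F_def a_def s_def \<phi>_def mult.commute)
qed

lemma beta_Suc:
  fixes \<mu> :: "'a::group_add \<Rightarrow> real"
  shows "beta \<mu> z t (Suc k) m (x + z) = beta \<mu> z t k m x * (\<mu> z * t / (1 + real k))"
proof -
  have e: "x + z - zp z (Suc k) = x - zp z k"
    by (simp add: diff_conv_add_uminus minus_add add.assoc del: add_uminus_conv_diff)
  show ?thesis unfolding beta_def e
    by (simp add: field_simps)
qed

lemma part1_point:
  fixes \<mu> :: "'a::group_add \<Rightarrow> real"
  assumes nonneg: "\<forall>z. \<mu> z \<ge> 0" and fin: "finite (supp \<mu>)" and prob: "(\<Sum>z\<in>supp \<mu>. \<mu> z) = 1"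
    and A1: "\<forall>x z. \<mu> (x + z - x) = \<mu> z" and zS: "z \<in> supp \<mu>" and t: "0 < t"
    and hC: "((\<lambda>(k,m). beta \<mu> z t k m x * (log_plus ((1 + real k) / (\<mu> z * t)))^2) has_sum Cx) UNIV"
  shows "heat_kernel \<mu> t x * Fh (heat_kernel \<mu> t (x + z) / heat_kernel \<mu> t x) \<le> Cx"
proof -
  let ?f = "heat_kernel \<mu> t"
  define s where "s = \<mu> z * t"
  have a0: "0 < \<mu> z" using zS nonneg by (auto simp: supp_def order_le_less)
  have s: "0 < s" using a0 t by (simp add: s_def)
  have bnn: "\<And>k m y. 0 \<le> beta \<mu> z t k m y" using beta_nonneg[OF nonneg] t by simp
  have hW: "((\<lambda>(k,m). beta \<mu> z t k m x) has_sum ?f x) UNIV"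
    using hk_pairs[OF nonneg fin prob A1 zS] t by simp
  have Cnn: "0 \<le> Cx"
    by (rule has_sum_nonneg[OF hC]) (auto simp: bnn)
  have fnn: "0 \<le> ?f x" by (rule has_sum_nonneg[OF hW]) (auto simp: bnn)
  show ?thesis
  proof (cases "?f x = 0")
    case True
    then show ?thesis using Cnn by simp
  next
    case False
    then have fpos: "0 < ?f x" using fnn by simp
    define g where "g = (\<lambda>(k,m). beta \<mu> z t k m (x + z))"
    define h where "h = (\<lambda>(k::nat,m::nat). (Suc k, m))"
    have hz: "(g has_sum ?f (x + z)) UNIV"
      unfolding g_def using hk_pairs[OF nonneg fin prob A1 zS] t by simp
    have "g summable_on (h ` UNIV)"
      using has_sum_imp_summable[OF hz] by (rule summable_on_subset_banach) simp
    then have hT: "(g has_sum (infsum g (h ` UNIV))) (h ` UNIV)" by simp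
    define B where "B = infsum g (h ` UNIV)"
    have BY: "B \<le> ?f (x + z)" unfolding B_def
      by (rule has_sum_mono2[OF hT hz]) (auto simp: g_def bnn)
    have inj: "inj_on h UNIV" by (auto simp: h_def inj_on_def)
    have "((g \<circ> h) has_sum B) UNIV" using hT has_sum_reindex[OF inj, of g B] by (simp add: B_def)
    moreover have "g \<circ> h = (\<lambda>(k,m). beta \<mu> z t k m x * (s / (1 + real k)))"
      by (rule ext) (auto simp: g_def h_def beta_Suc s_def)
    ultimately have hB: "((\<lambda>(k,m). beta \<mu> z t k m x * (s / (1 + real k))) has_sum B) UNIV" by simp
    define w where "w = (\<lambda>(k,m). beta \<mu> z t k m x)"
    define u where "u = (\<lambda>(k::nat,m::nat). s / (1 + real k))"
    have wn: "\<And>i. 0 \<le> w i" by (auto simp: w_def bnn)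
    have up: "\<And>i. 0 < u i" using s by (auto simp: u_def)
    have hB': "((\<lambda>i. w i * u i) has_sum B) UNIV"
      using hB by (rule has_sum_cong[THEN iffD1, rotated]) (auto simp: w_def u_def)
    have hC': "((\<lambda>i. w i * Fh (u i)) has_sum Cx) UNIV"
      using hC by (rule has_sum_cong[THEN iffD1, rotated]) (auto simp: w_def u_def Fh_def s_def)
    have hW': "(w has_sum ?f x) UNIV" using hW by (simp add: w_def)
    show ?thesis using jensen_tangent[OF wn up hW' hB' hC' fpos BY] .
  qed
qed

lemma part1:
  fixes \<mu> :: "'a::group_add \<Rightarrow> real"
  assumes nonneg: "\<forall>z. \<mu> z \<ge> 0" and fin: "finite (supp \<mu>)" and prob: "(\<Sum>z\<in>supp \<mu>. \<mu> z) = 1"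
    and A1: "\<forall>x z. \<mu> (x + z - x) = \<mu> z" and zS: "z \<in> supp \<mu>" and t: "0 < t"
  shows "\<exists>P. ((\<lambda>x. heat_kernel \<mu> t x * Fh (heat_kernel \<mu> t (x + z) / heat_kernel \<mu> t x)) has_sum P) UNIV
            \<and> P \<le> phi_sum (\<mu> z * t)"
proof -
  define \<phi> where "\<phi> k = (log_plus ((1 + real k) / (\<mu> z * t)))^2" for k :: nat
  define ff where "ff = (\<lambda>x (k,m). beta \<mu> z t k m x * \<phi> k)"
  define gg where "gg = (\<lambda>(k,m). exp (- t) * ((\<mu> z * t) ^ k / fact k) * (t ^ m / fact m) * (1 - \<mu> z) ^ m * \<phi> k)"
  have bnn: "\<And>k m y. 0 \<le> beta \<mu> z t k m y" using beta_nonneg[OF nonneg] t by simp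
  have nn: "\<And>x y. 0 \<le> ff x y" by (auto simp: ff_def bnn \<phi>_def split: prod.splits)
  have inner: "((\<lambda>x. ff x y) has_sum gg y) UNIV" for y
  proof (cases y)
    case (Pair k m)
    have "((\<lambda>x. beta \<mu> z t k m x * \<phi> k) has_sum
      (exp (- t) * ((\<mu> z * t) ^ k / fact k) * (t ^ m / fact m) * (1 - \<mu> z) ^ m * \<phi> k)) UNIV"
      using beta_total[OF fin prob zS, of t k m] by (rule has_sum_cmult_left)
    then show ?thesis unfolding Pair ff_def gg_def by simp
  qed
  have outer: "(gg has_sum phi_sum (\<mu> z * t)) UNIV"
    using pairs_total[OF nonneg fin prob zS t] by (simp add: gg_def \<phi>_def)
  note sw = swap_nonneg[of ff gg, OF nn inner outer]
  define C where "C x = (\<Sum>\<^sub>\<infinity>y. ff x y)" for x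
  have Ce: "C = (\<lambda>x. infsum (ff x) UNIV)" by (rule ext) (simp add: C_def)
  have hC: "(C has_sum phi_sum (\<mu> z * t)) UNIV" using sw(2) unfolding Ce .
  have le: "heat_kernel \<mu> t x * Fh (heat_kernel \<mu> t (x + z) / heat_kernel \<mu> t x) \<le> C x" for x
  proof -
    have "((\<lambda>(k,m). beta \<mu> z t k m x * (log_plus ((1 + real k) / (\<mu> z * t)))^2) has_sum C x) UNIV"
      using sw(1)[of x] unfolding Ce by (simp add: ff_def \<phi>_def)
    then show ?thesis by (rule part1_point[OF nonneg fin prob A1 zS t])
  qed
  have gnn: "0 \<le> heat_kernel \<mu> t x * Fh (heat_kernel \<mu> t (x + z) / heat_kernel \<mu> t x)" for x
  proof -
    have "((\<lambda>(k,m). beta \<mu> z t k m x) has_sum heat_kernel \<mu> t x) UNIV"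
      using hk_pairs[OF nonneg fin prob A1 zS] t by simp
    then have "0 \<le> heat_kernel \<mu> t x" by (rule has_sum_nonneg) (auto simp: bnn)
    then show ?thesis by (simp add: Fh_nonneg)
  qed
  have sm: "(\<lambda>x. heat_kernel \<mu> t x * Fh (heat_kernel \<mu> t (x + z) / heat_kernel \<mu> t x)) summable_on UNIV"
    by (rule summable_on_comparison_test[OF has_sum_imp_summable[OF hC]]) (use le gnn in auto)
  show ?thesis
  proof (intro exI conjI)
    show "((\<lambda>x. heat_kernel \<mu> t x * Fh (heat_kernel \<mu> t (x + z) / heat_kernel \<mu> t x)) has_sum
      (\<Sum>\<^sub>\<infinity>x. heat_kernel \<mu> t x * Fh (heat_kernel \<mu> t (x + z) / heat_kernel \<mu> t x))) UNIV"
      using sm by simp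
    show "(\<Sum>\<^sub>\<infinity>x. heat_kernel \<mu> t x * Fh (heat_kernel \<mu> t (x + z) / heat_kernel \<mu> t x)) \<le> phi_sum (\<mu> z * t)"
      using has_sum_mono[OF has_sum_infsum[OF sm] hC] le by auto
  qed
qed

lemma hk_nonneg:
  fixes \<mu> :: "'a::group_add \<Rightarrow> real"
  assumes nonneg: "\<forall>z. \<mu> z \<ge> 0" and fin: "finite (supp \<mu>)" and prob: "(\<Sum>z\<in>supp \<mu>. \<mu> z) = 1"
    and t: "0 \<le> t"
  shows "0 \<le> heat_kernel \<mu> t x"
  by (rule has_sum_nonneg[OF hk_series[OF nonneg fin prob t]])
     (use t nonneg conv_pow_nonneg[of \<mu>] in \<open>auto intro!: mult_nonneg_nonneg divide_nonneg_nonneg\<close>)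

lemma hk_pos_step:
  fixes \<mu> :: "'a::group_add \<Rightarrow> real"
  assumes nonneg: "\<forall>z. \<mu> z \<ge> 0" and fin: "finite (supp \<mu>)" and prob: "(\<Sum>z\<in>supp \<mu>. \<mu> z) = 1"
    and t: "0 < t" and fx: "0 < heat_kernel \<mu> t x" and wS: "w \<in> supp \<mu>"
  shows "0 < heat_kernel \<mu> t (x + w)"
proof -
  have Pnn: "\<And>n y. 0 \<le> conv_pow \<mu> n y" using nonneg by (simp add: conv_pow_nonneg)
  have hs: "\<And>y. ((\<lambda>n. exp (- t) * t ^ n / fact n * conv_pow \<mu> n y) has_sum heat_kernel \<mu> t y) UNIV"
    using hk_series[OF nonneg fin prob] t by simp
  obtain n where n: "conv_pow \<mu> n x \<noteq> 0"
  proof (rule ccontr)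
    assume "\<not> thesis"
    then have "\<And>n. conv_pow \<mu> n x = 0" using that by blast
    then have "((\<lambda>n. exp (- t) * t ^ n / fact n * conv_pow \<mu> n x) has_sum 0) UNIV"
      by (simp add: has_sum_0)
    then have "heat_kernel \<mu> t x = 0" using hs[of x] has_sum_unique by blast
    then show False using fx by simp
  qed
  then have npos: "0 < conv_pow \<mu> n x" using Pnn[of n x] by simp
  have wpos: "0 < \<mu> w" using wS nonneg by (auto simp: supp_def order_le_less)
  have "conv_pow \<mu> n x * \<mu> w \<le> (\<Sum>v\<in>supp \<mu>. conv_pow \<mu> n (x + w - v) * \<mu> v)"
    using member_le_sum[of w "supp \<mu>" "\<lambda>v. conv_pow \<mu> n (x + w - v) * \<mu> v"] fin wS Pnn nonneg
    by (simp add: mult_nonneg_nonneg)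
  then have "0 < conv_pow \<mu> (Suc n) (x + w)" using npos wpos
    by (simp del: sum.cong) (smt (verit) mult_pos_pos)
  then have "0 < exp (- t) * t ^ Suc n / fact (Suc n) * conv_pow \<mu> (Suc n) (x + w)"
    using t by simp
  also have "\<dots> \<le> heat_kernel \<mu> t (x + w)"
    using finite_sum_le_has_sum[OF hs[of "x + w"], of "{Suc n}"] t Pnn by simp
  finally show ?thesis .
qed

lemma sq_split: "(d::real)^2 = (max (- d) 0)^2 + (max d 0)^2"
  by (cases "d \<le> 0") (auto simp: max_def power2_eq_square)

lemma per_z:
  fixes \<mu> :: "'a::group_add \<Rightarrow> real"
  assumes nonneg: "\<forall>z. \<mu> z \<ge> 0" and fin: "finite (supp \<mu>)" and prob: "(\<Sum>z\<in>supp \<mu>. \<mu> z) = 1"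
    and A1: "\<forall>x z. \<mu> (x + z - x) = \<mu> z" and A2: "\<forall>z. \<mu> (- z) = \<mu> z"
    and zS: "z \<in> supp \<mu>" and t: "0 < t"
  shows "\<exists>E. ((\<lambda>x. heat_kernel \<mu> t x * (ln (heat_kernel \<mu> t (x + z)) - ln (heat_kernel \<mu> t x))^2)
            has_sum E) UNIV \<and> E \<le> 2 * phi_sum (\<mu> z * t)"
proof -
  let ?f = "heat_kernel \<mu> t"
  have mzS: "- z \<in> supp \<mu>" using zS A2 by (simp add: supp_def)
  have fnn: "\<And>y. 0 \<le> ?f y" using hk_nonneg[OF nonneg fin prob] t by simp
  obtain P1 where P1: "((\<lambda>x. ?f x * Fh (?f (x + z) / ?f x)) has_sum P1) UNIV" "P1 \<le> phi_sum (\<mu> z * t)"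
    using part1[OF nonneg fin prob A1 zS t] by blast
  obtain P2 where P2: "((\<lambda>x. ?f x * Fh (?f (x + - z) / ?f x)) has_sum P2) UNIV" "P2 \<le> phi_sum (\<mu> z * t)"
    using part1[OF nonneg fin prob A1 mzS t] A2 by auto
  have P2s: "((\<lambda>x. ?f (x + z) * Fh (?f x / ?f (x + z))) has_sum P2) UNIV"
    using has_sum_shift[OF P2(1), of z] by (simp add: add.assoc)
  define g2 where "g2 x = ?f x * Fh (?f x / ?f (x + z))" for x
  have g2nn: "0 \<le> g2 x" for x by (simp add: g2_def fnn Fh_nonneg)
  have g2le: "g2 x \<le> ?f (x + z) * Fh (?f x / ?f (x + z))" for x
  proof (cases "?f x \<le> ?f (x + z)")
    case True
    then show ?thesis unfolding g2_def by (intro mult_right_mono Fh_nonneg)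
  next
    case False
    have "Fh (?f x / ?f (x + z)) = 0"
    proof (cases "?f (x + z) = 0")
      case True
      then show ?thesis by (simp add: Fh_def log_plus_def)
    next
      case False
      then have "0 < ?f (x + z)" using fnn[of "x + z"] by simp
      then show ?thesis using \<open>\<not> ?f x \<le> ?f (x + z)\<close> by (intro Fh_ge1) simp
    qed
    then show ?thesis by (simp add: g2_def)
  qed
  have sm2: "g2 summable_on UNIV"
    by (rule summable_on_comparison_test[OF has_sum_imp_summable[OF P2s]]) (use g2le g2nn in auto)
  have S2: "infsum g2 UNIV \<le> P2"
    using has_sum_mono[OF has_sum_infsum[OF sm2] P2s] g2le by auto
  have eq: "?f x * (ln (?f (x + z)) - ln (?f x))^2 = ?f x * Fh (?f (x + z) / ?f x) + g2 x" for x
  proof (cases "?f x = 0")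
    case True
    then show ?thesis by (simp add: g2_def)
  next
    case False
    then have fx: "0 < ?f x" using fnn[of x] by simp
    have fxz: "0 < ?f (x + z)" by (rule hk_pos_step[OF nonneg fin prob t fx zS])
    have "Fh (?f (x + z) / ?f x) = (max (- (ln (?f (x + z)) - ln (?f x))) 0)^2"
      using fx fxz by (simp add: Fh_alt ln_div)
    moreover have "Fh (?f x / ?f (x + z)) = (max (ln (?f (x + z)) - ln (?f x)) 0)^2"
      using fx fxz by (simp add: Fh_alt ln_div)
    ultimately show ?thesis unfolding g2_def using sq_split[of "ln (?f (x + z)) - ln (?f x)"]
      by (simp add: algebra_simps)
  qed
  have "((\<lambda>x. ?f x * Fh (?f (x + z) / ?f x) + g2 x) has_sum (P1 + infsum g2 UNIV)) UNIV"
    by (intro has_sum_add P1(1) has_sum_infsum sm2)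
  then have "((\<lambda>x. ?f x * (ln (?f (x + z)) - ln (?f x))^2) has_sum (P1 + infsum g2 UNIV)) UNIV"
    by (simp only: eq)
  then show ?thesis using P1(2) P2(2) S2 by (intro exI[of _ "P1 + infsum g2 UNIV"]) auto
qed

theorem proposition1:
  fixes \<mu> :: "'a::group_add \<Rightarrow> real" and t :: real
  assumes nonneg: "\<forall>z. \<mu> z \<ge> 0"
    and fin: "finite (supp \<mu>)"
    and prob: "(\<Sum>z\<in>supp \<mu>. \<mu> z) = 1"
    and A1: "\<forall>x z. \<mu> (x + z - x) = \<mu> z"
    and A2: "\<forall>z. \<mu> (- z) = \<mu> z"
    and t: "t \<ge> 0"
  shows "\<exists>E. ((\<lambda>x. heat_kernel \<mu> t x *
                 carre_du_champ \<mu> (\<lambda>y. ln (heat_kernel \<mu> t y)) x) has_sum E) UNIV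
           \<and> 2 * t * E \<le> (\<Sum>z\<in>supp \<mu>. U_fun (\<mu> z * t))"
proof (cases "t = 0")
  case True
  have f0: "heat_kernel \<mu> 0 x = 0" if "x \<noteq> 0" for x
  proof -
    have "((\<lambda>n. exp (- 0) * 0 ^ n / fact n * conv_pow \<mu> n x) has_sum 0) UNIV"
      by (rule has_sum_finite_neutralI[of "{0}"]) (use that in auto)
    then show ?thesis using hk_series[OF nonneg fin prob, of 0 x] has_sum_unique by auto
  qed
  let ?F = "\<lambda>x. heat_kernel \<mu> t x * carre_du_champ \<mu> (\<lambda>y. ln (heat_kernel \<mu> t y)) x"
  have "(?F has_sum ?F 0) UNIV"
    by (rule has_sum_finite_neutralI[of "{0}"]) (use f0 True in auto)
  moreover have "(\<Sum>z\<in>supp \<mu>. U_fun (\<mu> z * t)) = 0" using True by (simp add: U_fun_def)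
  ultimately show ?thesis using True by auto
next
  case False
  then have tp: "0 < t" using t by simp
  let ?f = "heat_kernel \<mu> t"
  define D where "D z x = ?f x * (ln (?f (x + z)) - ln (?f x))^2" for z x
  define E where "E z = infsum (D z) UNIV" for z
  have hE: "(D z has_sum E z) UNIV \<and> E z \<le> 2 * phi_sum (\<mu> z * t)" if zS: "z \<in> supp \<mu>" for z
  proof -
    obtain e where e: "(D z has_sum e) UNIV" "e \<le> 2 * phi_sum (\<mu> z * t)"
      using per_z[OF nonneg fin prob A1 A2 zS tp] unfolding D_def by blast
    then have "E z = e" unfolding E_def by (simp add: infsumI)
    then show ?thesis using e by simp
  qed
  have Feq: "(\<lambda>x. ?f x * carre_du_champ \<mu> (\<lambda>y. ln (?f y)) x)
      = (\<lambda>x. \<Sum>z\<in>supp \<mu>. (\<mu> z / 2) * D z x)"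
    by (rule ext) (simp add: carre_du_champ_def D_def sum_distrib_left algebra_simps)
  have "((\<lambda>x. \<Sum>z\<in>supp \<mu>. (\<mu> z / 2) * D z x) has_sum (\<Sum>z\<in>supp \<mu>. (\<mu> z / 2) * E z)) UNIV"
    by (intro has_sum_sum_fun fin has_sum_cmult_right) (use hE in blast)
  moreover have "2 * t * (\<Sum>z\<in>supp \<mu>. (\<mu> z / 2) * E z) \<le> (\<Sum>z\<in>supp \<mu>. U_fun (\<mu> z * t))"
  proof -
    have "2 * t * (\<Sum>z\<in>supp \<mu>. (\<mu> z / 2) * E z) = (\<Sum>z\<in>supp \<mu>. (t * \<mu> z) * E z)"
      by (simp add: sum_distrib_left algebra_simps)
    also have "\<dots> \<le> (\<Sum>z\<in>supp \<mu>. U_fun (\<mu> z * t))"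
    proof (rule sum_mono)
      fix z assume zS: "z \<in> supp \<mu>"
      have a0: "0 < \<mu> z" using zS nonneg by (auto simp: supp_def order_le_less)
      have "(t * \<mu> z) * E z \<le> (t * \<mu> z) * (2 * phi_sum (\<mu> z * t))"
        using hE[OF zS] a0 tp by (intro mult_left_mono) auto
      also have "\<dots> = U_fun (\<mu> z * t)"
        using a0 tp by (simp add: U_fun_def phi_sum_def algebra_simps)
      finally show "(t * \<mu> z) * E z \<le> U_fun (\<mu> z * t)" .
    qed
    finally show ?thesis .
  qed
  ultimately show ?thesis unfolding Feq by blast
qed

end
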